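(* Let $n,m\ge1$ and $A\subseteq\Omega_n$. Then $\mu_{n+m}(A\times\{0,1\}^m)=\mu_n(A)$.
   Context: For $n\ge1$, $\Omega_n$ is the set of strings $\omega=\alpha_0\alpha_1\cdots\alpha_n$ with $\alpha_k\in\{0,1\}$, $\alpha_0=0$. For $\omega=\alpha_0\cdots\alpha_n$, $\omega'=\alpha'_0\cdots\alpha'_n\in\Omega_n$ let $D^n(\omega,\omega')=2^{-n}\prod_{k=1}^n i^{|\alpha_k-\alpha_{k-1}|}\prod_{k=1}^n i^{-|\alpha'_k-\alpha'_{k-1}|}\,\delta_{\alpha_n\alpha'_n}$ ($i=\sqrt{-1}$), and for $A\subseteq\Omega_n$ let $\mu_n(A)=\sum_{\omega,\omega'\in A}D^n(\omega,\omega')$. For $A\subseteq\Omega_n$, $A\times\{0,1\}^m\subseteq\Omega_{n+m}$ is the set of strings obtained by appending to the right of some $\omega\in A$ an arbitrary string of $m$ bits. *)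

theory Defs
  imports Complex_Main
begin

text \<open>Bit strings \<alpha>_0 ... \<alpha>_n are modelled as lists of naturals of length n+1
  with entries in {0,1}; index k of the list is \<alpha>_k.\<close>

definition Omega :: "nat \<Rightarrow> nat list set" where
  "Omega n = {w. length w = n + 1 \<and> set w \<subseteq> {0, 1} \<and> w ! 0 = 0}"

definition Dn :: "nat \<Rightarrow> nat list \<Rightarrow> nat list \<Rightarrow> complex" where
  "Dn n w w' =
     (1 / 2 ^ n) *
     (\<Prod>k\<in>{1..n}. \<i> ^ nat \<bar>int (w ! k) - int (w ! (k - 1))\<bar>) *
     (\<Prod>k\<in>{1..n}. \<i> powi (- \<bar>int (w' ! k) - int (w' ! (k - 1))\<bar>)) *
     (if w ! n = w' ! n then 1 else 0)"

definition mu :: "nat \<Rightarrow> nat list set \<Rightarrow> complex" where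
  "mu n A = (\<Sum>w\<in>A. \<Sum>w'\<in>A. Dn n w w')"

text \<open>A \<times> {0,1}^m: append an arbitrary string of m bits to the right.\<close>
definition ext :: "nat list set \<Rightarrow> nat \<Rightarrow> nat list set" where
  "ext A m = {w @ v | w v. w \<in> A \<and> length v = m \<and> set v \<subseteq> {0, 1}}"

end

theory Submission
  imports Defs
begin

lemma prod_split:
  assumes "length w = n + 1"
  shows "(\<Prod>k\<in>{1..Suc n}. F ((w@[c])!k) ((w@[c])!(k-1))) =
         (\<Prod>k\<in>{1..n}. F (w!k) (w!(k-1))) * F c (w!n)"
proof -
  have "{1..Suc n} = insert (Suc n) {1..n}" by auto
  hence "(\<Prod>k\<in>{1..Suc n}. F ((w@[c])!k) ((w@[c])!(k-1))) =
     F ((w@[c])!Suc n) ((w@[c])!n) * (\<Prod>k\<in>{1..n}. F ((w@[c])!k) ((w@[c])!(k-1)))"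
    by simp
  also have "(\<Prod>k\<in>{1..n}. F ((w@[c])!k) ((w@[c])!(k-1))) = (\<Prod>k\<in>{1..n}. F (w!k) (w!(k-1)))"
    by (rule prod.cong) (use assms in \<open>auto simp: nth_append\<close>)
  finally show ?thesis using assms by (simp add: nth_append mult.commute)
qed

lemma diag_sum:
  assumes "a \<in> {0,1::nat}" "b \<in> {0,1::nat}"
  shows "(\<Sum>c\<in>{0,1::nat}. \<i> ^ nat \<bar>int c - int a\<bar> * \<i> powi (- \<bar>int c - int b\<bar>)) =
         (if a = b then 2 else 0)"
  using assms by (auto simp: power_int_minus)

lemma Dn_step:
  assumes "length w = n + 1" "length w' = n + 1" "set w \<subseteq> {0,1}" "set w' \<subseteq> {0,1}"
  shows "(\<Sum>c\<in>{0,1::nat}. \<Sum>d\<in>{0,1::nat}. Dn (Suc n) (w@[c]) (w'@[d])) = Dn n w w'"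
proof -
  define P where "P = (\<Prod>k\<in>{1..n}. \<i> ^ nat \<bar>int (w ! k) - int (w ! (k - 1))\<bar>)"
  define Q where "Q = (\<Prod>k\<in>{1..n}. \<i> powi (- \<bar>int (w' ! k) - int (w' ! (k - 1))\<bar>))"
  have e: "Dn (Suc n) (w@[c]) (w'@[d]) = (1 / 2 ^ Suc n) * P * Q *
     (\<i> ^ nat \<bar>int c - int (w!n)\<bar> * \<i> powi (- \<bar>int d - int (w'!n)\<bar>)) * (if c = d then 1 else 0)"
    for c d
    unfolding Dn_def P_def Q_def
    using prod_split[OF assms(1), of "\<lambda>x y. \<i> ^ nat \<bar>int x - int y\<bar>" c]
          prod_split[OF assms(2), of "\<lambda>x y. \<i> powi (- \<bar>int x - int y\<bar>)" d]
    using assms by (simp add: nth_append)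
  have wn: "w!n \<in> {0,1}" using assms(1,3) by (metis add.commute less_add_one nth_mem plus_1_eq_Suc subsetD)
  have wn': "w'!n \<in> {0,1}" using assms(2,4) by (metis add.commute less_add_one nth_mem plus_1_eq_Suc subsetD)
  have "(\<Sum>c\<in>{0,1::nat}. \<Sum>d\<in>{0,1::nat}. Dn (Suc n) (w@[c]) (w'@[d])) =
     (1 / 2 ^ Suc n) * P * Q * (\<Sum>c\<in>{0,1::nat}. \<i> ^ nat \<bar>int c - int (w!n)\<bar> * \<i> powi (- \<bar>int c - int (w'!n)\<bar>))"
    by (simp add: e algebra_simps)
  also have "\<dots> = Dn n w w'"
    unfolding diag_sum[OF wn wn'] Dn_def P_def Q_def by simp
  finally show ?thesis .
qed

lemma ext_one:
  assumes "A \<subseteq> Omega n"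
  shows "ext A 1 = (\<lambda>(w,c). w @ [c]) ` (A \<times> {0,1})"
  unfolding ext_def apply (auto simp: length_Suc_conv)
  subgoal for a by (rule exI[of _ a], rule exI[of _ "[0]"]) simp
  subgoal for a by (rule exI[of _ a], rule exI[of _ "[1]"]) simp
  done

lemma mu_step:
  assumes "A \<subseteq> Omega n"
  shows "mu (Suc n) (ext A 1) = mu n A"
proof -
  have inj: "inj_on (\<lambda>(w,c). w @ [c]) (A \<times> {0::nat,1})"
    unfolding inj_on_def by auto
  have "mu (Suc n) (ext A 1) = (\<Sum>(w,c)\<in>A \<times> {0::nat,1}. \<Sum>(w',d)\<in>A \<times> {0::nat,1}.
          Dn (Suc n) (w @ [c]) (w' @ [d]))"
    unfolding mu_def ext_one[OF assms] sum.reindex[OF inj]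
    by (simp add: case_prod_unfold)
  also have "\<dots> = (\<Sum>w\<in>A. \<Sum>c\<in>{0::nat,1}. \<Sum>w'\<in>A. \<Sum>d\<in>{0::nat,1}. Dn (Suc n) (w @ [c]) (w' @ [d]))"
    unfolding sum.cartesian_product[symmetric] ..
  also have "\<dots> = (\<Sum>w\<in>A. \<Sum>w'\<in>A. \<Sum>c\<in>{0::nat,1}. \<Sum>d\<in>{0::nat,1}. Dn (Suc n) (w @ [c]) (w' @ [d]))"
    by (rule sum.cong[OF refl], rule sum.swap)
  also have "\<dots> = (\<Sum>w\<in>A. \<Sum>w'\<in>A. Dn n w w')"
    apply (rule sum.cong, simp, rule sum.cong, simp)
    apply (rule Dn_step) using assms by (auto simp: Omega_def)
  finally show ?thesis unfolding mu_def .
qed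

lemma ext_Omega:
  assumes "A \<subseteq> Omega n"
  shows "ext A m \<subseteq> Omega (n + m)"
proof
  fix u assume "u \<in> ext A m"
  then obtain w v where u: "u = w @ v" "w \<in> A" "length v = m" "set v \<subseteq> {0,1}"
    unfolding ext_def by blast
  have w: "length w = n + 1" "set w \<subseteq> {0,1}" "w ! 0 = 0" using u(2) assms unfolding Omega_def by auto
  show "u \<in> Omega (n + m)" unfolding Omega_def
    using u w by (auto simp: nth_append)
qed

lemma ext_Suc:
  "ext A (Suc m) = ext (ext A m) 1"
proof
  show "ext A (Suc m) \<subseteq> ext (ext A m) 1"
  proof
    fix u assume "u \<in> ext A (Suc m)"
    then obtain w v where u: "u = w @ v" "w \<in> A" "length v = Suc m" "set v \<subseteq> {0,1}"
      unfolding ext_def by auto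
    then obtain v' x where v: "v = v' @ [x]" by (metis length_Suc_conv_rev)
    have "w @ v' \<in> ext A m" using u v unfolding ext_def by auto
    then show "u \<in> ext (ext A m) 1" using u v unfolding ext_def[of "ext A m"]
      by (intro CollectI exI[of _ "w @ v'"] exI[of _ "[x]"]) auto
  qed
next
  show "ext (ext A m) 1 \<subseteq> ext A (Suc m)"
  proof
    fix u assume "u \<in> ext (ext A m) 1"
    then obtain z v where u: "u = z @ v" "z \<in> ext A m" "length v = 1" "set v \<subseteq> {0,1}"
      unfolding ext_def[of "ext A m"] by blast
    then obtain w y where z: "z = w @ y" "w \<in> A" "length y = m" "set y \<subseteq> {0,1}"
      unfolding ext_def by blast
    show "u \<in> ext A (Suc m)" unfolding ext_def
      by (intro CollectI exI[of _ w] exI[of _ "y @ v"]) (use u z in auto)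
  qed
qed

lemma ext_zero: "ext A 0 = A"
  unfolding ext_def by auto

theorem corollary3p2:
  fixes n m :: nat and A :: "nat list set"
  assumes "n \<ge> 1" and "m \<ge> 1" and "A \<subseteq> Omega n"
  shows "mu (n + m) (ext A m) = mu n A"
proof (induction m)
  case 0 then show ?case by (simp add: ext_zero)
next
  case (Suc m)
  have "mu (n + Suc m) (ext A (Suc m)) = mu (Suc (n + m)) (ext (ext A m) 1)"
    by (simp only: ext_Suc add_Suc_right)
  also have "\<dots> = mu (n + m) (ext A m)"
    by (rule mu_step[OF ext_Omega[OF assms(3)]])
  finally show ?case using Suc by simp
qed

end
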